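(* Let $C>0$ and $f:\mathbb R\to\mathbb R$, $f(x)=\log(1+e^{-x})$. Then for all $a\in[-C,C]$ and all $b\in\mathbb R$, \[f(a)\ge f(b)+f'(b)(a-b)+\frac{e^b}{2(1+C)}f'(b)^2(a-b)^2.\] *)

theory Defs
  imports "HOL-Analysis.Analysis"
begin

definition logistic_loss :: "real \<Rightarrow> real" where
  "logistic_loss x = ln (1 + exp (- x))"

end

theory Submission
  imports Defs
begin

lemma taylor2_ge:
  fixes g g1 g2 :: "real \<Rightarrow> real" and a b :: real
  assumes d1: "\<And>t. (g has_real_derivative g1 t) (at t)"
  and d2: "\<And>t. (g1 has_real_derivative g2 t) (at t)"
  and nn: "\<And>t. min a b \<le> t \<Longrightarrow> t \<le> max a b \<Longrightarrow> g2 t \<ge> 0"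
  shows "g a \<ge> g b + g1 b * (a - b)"
proof (cases a b rule: linorder_cases)
  case less
  obtain z where z: "a < z" "z < b" "g b - g a = (b - a) * g1 z"
    using MVT2[OF less, of g g1] d1 by blast
  obtain w where w: "z < w" "w < b" "g1 b - g1 z = (b - z) * g2 w"
    using MVT2[OF z(2), of g1 g2] d2 by blast
  have "g2 w \<ge> 0" using nn[of w] z w less by auto
  hence "g1 z \<le> g1 b" using w z by (smt (verit) mult_nonneg_nonneg)
  hence "(b - a) * g1 z \<le> (b - a) * g1 b" using less by (simp add: mult_left_mono)
  thus ?thesis using z by (simp add: algebra_simps)
next
  case equal thus ?thesis by simp
next
  case greater
  obtain z where z: "b < z" "z < a" "g a - g b = (a - b) * g1 z"
    using MVT2[OF greater, of g g1] d1 by blast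
  obtain w where w: "b < w" "w < z" "g1 z - g1 b = (z - b) * g2 w"
    using MVT2[OF z(1), of g1 g2] d2 by blast
  have "g2 w \<ge> 0" using nn[of w] z w greater by auto
  hence "g1 z \<ge> g1 b" using w z by (smt (verit) mult_nonneg_nonneg)
  hence "(a - b) * g1 z \<ge> (a - b) * g1 b" using greater by (simp add: mult_left_mono)
  thus ?thesis using z by (simp add: algebra_simps)
qed

lemma d_f: "(logistic_loss has_real_derivative (- 1 / (1 + exp t))) (at t)"
proof -
  have "((\<lambda>x. ln (1 + exp (- x))) has_real_derivative (1 / (1 + exp (- t))) * (exp (- t) * (- 1))) (at t)"
    by (rule derivative_eq_intros refl | simp add: add_pos_pos)+
  moreover have "(1 / (1 + exp (- t))) * (exp (- t) * (- 1)) = - 1 / (1 + exp t)"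
    by (simp add: exp_minus field_simps add_pos_pos)
  ultimately show ?thesis unfolding logistic_loss_def[abs_def] by simp
qed

lemma d_f1: "((\<lambda>t. - 1 / (1 + exp t)) has_real_derivative (exp t / (1 + exp t)^2)) (at t)"
proof -
  have "1 + exp t \<noteq> 0" by (smt (verit) exp_gt_zero)
  show ?thesis
    by (rule derivative_eq_intros refl | use \<open>1 + exp t \<noteq> 0\<close> in \<open>simp add: power2_eq_square\<close>)+
qed

lemma f2_exp_bound:
  fixes t b :: real
  shows "exp t / (1 + exp t)^2 \<ge> exp b / (1 + exp b)^2 * exp (- \<bar>t - b\<bar>)"
proof -
  define x where "x = exp t"
  define y where "y = exp b"
  have x: "x > 0" and y: "y > 0" by (auto simp: x_def y_def)
  show ?thesis
  proof (cases "t \<ge> b")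
    case True
    have e: "exp (- \<bar>t - b\<bar>) = y / x" using True by (simp add: x_def y_def exp_diff exp_minus field_simps)
    have xy: "x \<ge> y" using True by (simp add: x_def y_def)
    have "x * (1 + y) \<ge> y * (1 + x)" using xy by (simp add: algebra_simps)
    hence "(x * (1 + y))^2 \<ge> (y * (1 + x))^2" using x y by (intro power_mono) auto
    moreover have p: "(1+x)^2 > 0" "(1+y)^2 > 0" using x y by auto
    moreover have "y / (1 + y)^2 * (y / x) = (y * (1 + x))^2 / (x * (1 + x)^2 * (1 + y)^2)"
      using x p by (simp add: power_mult_distrib power2_eq_square mult.commute)
    moreover have "x / (1 + x)^2 = (x * (1 + y))^2 / (x * (1 + x)^2 * (1 + y)^2)"
      using x y p by (simp add: power_mult_distrib power2_eq_square)
    ultimately have "y / (1 + y)^2 * (y / x) \<le> x / (1 + x)^2" using x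
      by (simp add: divide_right_mono)
    thus ?thesis unfolding e by (simp add: x_def y_def)
  next
    case False
    have e: "exp (- \<bar>t - b\<bar>) = x / y" using False by (simp add: x_def y_def exp_diff exp_minus field_simps)
    have xy: "x \<le> y" using False by (simp add: x_def y_def)
    have "(1 + x)^2 \<le> (1 + y)^2" using xy x by (intro power_mono) auto
    hence "y / (1 + y)^2 * (x / y) \<le> x / (1 + x)^2" using x y
      by (simp add: divide_left_mono)
    thus ?thesis unfolding e by (simp add: x_def y_def)
  qed
qed

lemma f2_mono:
  fixes t b :: real
  assumes "(exp t - exp b) * (exp t * exp b - 1) \<le> 0"
  shows "exp t / (1 + exp t)^2 \<ge> exp b / (1 + exp b)^2"
proof -
  define x where "x = exp t"
  define y where "y = exp b"
  have x: "x > 0" and y: "y > 0" by (auto simp: x_def y_def)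
  have h: "(x - y) * (x * y - 1) \<le> 0" using assms by (simp add: x_def y_def)
  have "y * (1 + x)^2 \<le> x * (1 + y)^2" using h by (simp add: algebra_simps power2_eq_square)
  hence "y / (1 + y)^2 \<le> x / (1 + x)^2" using x y by (simp add: field_simps)
  thus ?thesis by (simp add: x_def y_def)
qed

lemma exp_aux:
  fixes d :: real
  assumes "d \<ge> 0"
  shows "exp (- d) * (2 + d) \<ge> 2 - d"
proof -
  have "(\<lambda>u. exp (- u) * (2 + u) - (2 - u)) d \<ge> (\<lambda>u. exp (- u) * (2 + u) - (2 - u)) 0
      + (\<lambda>u. 1 - exp (- u) * (1 + u)) 0 * (d - 0)"
  proof (rule taylor2_ge[of _ _ "\<lambda>u. u * exp (- u)"])
    fix t :: real
    show "((\<lambda>u. exp (- u) * (2 + u) - (2 - u)) has_real_derivative 1 - exp (- t) * (1 + t)) (at t)"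
      by (rule derivative_eq_intros refl | simp add: algebra_simps)+
    show "((\<lambda>u. 1 - exp (- u) * (1 + u)) has_real_derivative t * exp (- t)) (at t)"
      by (rule derivative_eq_intros refl | simp add: algebra_simps)+
  next
    fix t :: real assume "min d 0 \<le> t" "t \<le> max d 0"
    thus "0 \<le> t * exp (- t)" using assms by auto
  qed
  thus ?thesis by simp
qed

theorem lemma3:
  fixes C a b :: real
  assumes "C > 0" and "a \<in> {-C..C}"
  shows "logistic_loss a \<ge> logistic_loss b + deriv logistic_loss b * (a - b)
           + exp b / (2 * (1 + C)) * (deriv logistic_loss b)\<^sup>2 * (a - b)\<^sup>2"
proof -
  have dv: "deriv logistic_loss b = - 1 / (1 + exp b)" by (rule DERIV_imp_deriv[OF d_f])
  define D where "D = exp b / (1 + exp b)^2"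
  have "1 + exp b > 0" by (smt (verit) exp_gt_zero)
  hence Dpos: "D > 0" unfolding D_def by (intro divide_pos_pos) auto
  have Ceq: "exp b / (2 * (1 + C)) * (deriv logistic_loss b)\<^sup>2 = D / (2 * (1 + C))"
    unfolding dv D_def by (simp add: power2_eq_square)
  have Q: "exp b / (2 * (1 + C)) * (deriv logistic_loss b)\<^sup>2 * (a - b)\<^sup>2 = D / (2 * (1 + C)) * (a - b)\<^sup>2"
    using Ceq by (metis (no_types, lifting))
  have aC: "-C \<le> a" "a \<le> C" using assms(2) by auto
  have Cp: "1 + C > 0" using assms(1) by simp
  show ?thesis
  proof (cases "\<bar>b\<bar> > C")
    case True
    have "(\<lambda>t. logistic_loss t - D / (2 * (1 + C)) * (t - b)^2) a \<ge>
          (\<lambda>t. logistic_loss t - D / (2 * (1 + C)) * (t - b)^2) b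
          + (\<lambda>t. - 1 / (1 + exp t) - D / (1 + C) * (t - b)) b * (a - b)"
    proof (rule taylor2_ge[of "\<lambda>t. logistic_loss t - D / (2 * (1 + C)) * (t - b)^2" "\<lambda>t. - 1 / (1 + exp t) - D / (1 + C) * (t - b)" "\<lambda>t. exp t / (1 + exp t)^2 - D / (1 + C)"])
      fix t :: real
      have ne: "1 + exp t \<noteq> 0" by (smt (verit) exp_gt_zero)
        have e: "(2 * t - 2 * b) * D / (2 + 2 * C) = D * (t - b) / (1 + C)"
          using Cp by (simp add: field_simps)
        show "((\<lambda>t. logistic_loss t - D / (2 * (1 + C)) * (t - b)^2) has_real_derivative
             - 1 / (1 + exp t) - D / (1 + C) * (t - b)) (at t)"
        using Cp by (auto intro!: derivative_eq_intros d_f simp: power2_eq_square e)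
      show "((\<lambda>t. - 1 / (1 + exp t) - D / (1 + C) * (t - b)) has_real_derivative
             exp t / (1 + exp t)^2 - D / (1 + C)) (at t)"
        using Cp ne by (auto intro!: derivative_eq_intros simp: power2_eq_square)
    next
      fix t :: real assume t: "min a b \<le> t" "t \<le> max a b"
      have "(exp t - exp b) * (exp t * exp b - 1) \<le> 0"
      proof (cases "b > C")
        case True
        have "exp t \<le> exp b" using t True aC by auto
        moreover have "exp t * exp b \<ge> 1" unfolding exp_add[symmetric] using t True aC by auto
        ultimately show ?thesis by (simp add: mult_nonpos_nonneg)
      next
        case False
        hence bl: "b < - C" using \<open>\<bar>b\<bar> > C\<close> by auto
        have "exp t \<ge> exp b" using t bl aC by auto
        moreover have "exp t * exp b \<le> 1" unfolding exp_add[symmetric] using t bl aC by auto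
        ultimately show ?thesis by (simp add: mult_nonneg_nonpos)
      qed
      hence "exp t / (1 + exp t)^2 \<ge> D" unfolding D_def by (rule f2_mono)
      moreover have "D / (1 + C) \<le> D" using Dpos assms(1) by (simp add: divide_le_eq)
      ultimately show "0 \<le> exp t / (1 + exp t)^2 - D / (1 + C)" by simp
    qed
    then have X: "logistic_loss a \<ge> logistic_loss b + (- 1 / (1 + exp b)) * (a - b) + D / (2 * (1 + C)) * (a - b)\<^sup>2"
      by (simp add: algebra_simps)
    show ?thesis apply (subst Q) apply (subst dv) using X by linarith
  next
    case False
    define s :: real where "s = (if b \<le> a then 1 else -1)"
    have ss: "s * s = 1" unfolding s_def by simp
    define d where "d = \<bar>a - b\<bar>"
    have sd: "s * (a - b) = d" unfolding s_def d_def by auto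
    have "(\<lambda>t. logistic_loss t - D * (exp (- s * (t - b)) + s * (t - b) - 1)) a \<ge>
          (\<lambda>t. logistic_loss t - D * (exp (- s * (t - b)) + s * (t - b) - 1)) b
          + (\<lambda>t. - 1 / (1 + exp t) - D * (- s * exp (- s * (t - b)) + s)) b * (a - b)"
    proof (rule taylor2_ge[of "\<lambda>t. logistic_loss t - D * (exp (- s * (t - b)) + s * (t - b) - 1)" "\<lambda>t. - 1 / (1 + exp t) - D * (- s * exp (- s * (t - b)) + s)" "\<lambda>t. exp t / (1 + exp t)^2 - D * exp (- s * (t - b))"])
      fix t :: real
      have ne: "1 + exp t \<noteq> 0" by (smt (verit) exp_gt_zero)
      show "((\<lambda>t. logistic_loss t - D * (exp (- s * (t - b)) + s * (t - b) - 1)) has_real_derivative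
             - 1 / (1 + exp t) - D * (- s * exp (- s * (t - b)) + s)) (at t)"
        by (auto intro!: derivative_eq_intros d_f simp: algebra_simps)
      show "((\<lambda>t. - 1 / (1 + exp t) - D * (- s * exp (- s * (t - b)) + s)) has_real_derivative
             exp t / (1 + exp t)^2 - D * exp (- s * (t - b))) (at t)"
        using ss ne by (auto intro!: derivative_eq_intros simp: algebra_simps power2_eq_square)
    next
      fix t :: real assume t: "min a b \<le> t" "t \<le> max a b"
      have "s * (t - b) = \<bar>t - b\<bar>" using t unfolding s_def by auto
      thus "0 \<le> exp t / (1 + exp t)^2 - D * exp (- s * (t - b))"
        using f2_exp_bound[of b t] unfolding D_def by simp
    qed
    hence main: "logistic_loss a \<ge> logistic_loss b + (- 1 / (1 + exp b)) * (a - b)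
                  + D * (exp (- d) + d - 1)"
      using sd by (simp add: algebra_simps)
    have d0: "d \<ge> 0" unfolding d_def by simp
    have d2C: "d \<le> 2 * C" unfolding d_def using False aC by auto
    have "exp (- d) * (2 + d) \<ge> 2 - d" by (rule exp_aux[OF d0])
    hence "(exp (- d) + d - 1) * (2 + d) \<ge> d^2" by (simp add: algebra_simps power2_eq_square)
    hence "exp (- d) + d - 1 \<ge> d^2 / (2 + d)" using d0 by (simp add: divide_le_eq mult.commute)
    moreover have "d^2 / (2 + d) \<ge> d^2 / (2 * (1 + C))"
      using d0 d2C by (intro divide_left_mono) auto
    ultimately have "exp (- d) + d - 1 \<ge> d^2 / (2 * (1 + C))" by linarith
    hence "D * (exp (- d) + d - 1) \<ge> D * (d^2 / (2 * (1 + C)))"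
      using Dpos by (intro mult_left_mono) auto
    moreover have "d^2 = (a - b)^2" unfolding d_def by simp
    ultimately have X: "logistic_loss a \<ge> logistic_loss b + (- 1 / (1 + exp b)) * (a - b) + D / (2 * (1 + C)) * (a - b)\<^sup>2"
      using main by simp
    show ?thesis apply (subst Q) apply (subst dv) using X by linarith
  qed
qed

end
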